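(* Let $f$ be a non-imposing ABC voting rule that satisfies anonymity, neutrality, and consistency. Then there is a function $\hat g:\mathbb Q^{|\mathcal A|}\to 2^{\mathcal W_k}\setminus\{\emptyset\}$ that is neutral (i.e., $\hat g(\tau(v))=\{\tau(W):W\in\hat g(v)\}$ for all $v\in\mathbb Q^{|\mathcal A|}$ and all permutations $\tau$ of $\mathcal C$), consistent (i.e., $\hat g(v+v')=\hat g(v)\cap\hat g(v')$ for all $v,v'\in\mathbb Q^{|\mathcal A|}$ with $\hat g(v)\cap\hat g(v')\neq\emptyset$), and satisfies $\hat g(v(A))=f(A)$ for all profiles $A\in\mathcal A^*$.
   Context: Let $\mathcal C=\{c_1,\dots,c_m\}$ be a set of $m\ge 2$ candidates and $\mathbb N=\{1,2,\dots\}$ the set of potential voters. An approval ballot is a non-empty subset of $\mathcal C$; $\mathcal A$ is the set of all ballots. A profile is a map $A:N_A\to\mathcal A$ for a non-empty finite electorate $N_A\subseteq\mathbb N$; $\mathcal A^*$ is the set of all profiles; for disjoint electorates, $A+A'$ denotes the union profile. Fix $k\in\{1,\dots,m-1\}$; $\mathcal W_k$ is the set of $k$-element subsets of $\mathcal C$. An ABC voting rule is a map $f:\mathcal A^*\to 2^{\mathcal W_k}\setminus\{\emptyset\}$. Anonymity: $f(A)$ is invariant under renaming voters. Neutrality: $f(\tau(A))=\{\tau(W):W\in f(A)\}$ for every permutation $\tau$ of $\mathcal C$, where $\tau(A)_i=\tau(A_i)$. Consistency: $f(A+A')=f(A)\cap f(A')$ for disjoint $A,A'$ with $f(A)\cap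 f(A')\neq\emptyset$. $f$ is non-imposing if for every $W\in\mathcal W_k$ there is a profile $A$ with $f(A)=\{W\}$. Fix a bijection $B:\{1,\dots,|\mathcal A|\}\to\mathcal A$. For a profile $A$, $v(A)\in\mathbb N_0^{|\mathcal A|}$ is the vector whose $\ell$-th entry is the number of voters in $A$ with ballot $B(\ell)$. For a permutation $\tau$ of $\mathcal C$ and a vector $v$ (real entries allowed), $\tau(v)$ is defined by $\tau(v)_{\ell_1}=v_{\ell_2}$ whenever $B(\ell_1)=\tau(B(\ell_2))$. *)

theory Defs
  imports Complex_Main "HOL-Library.Cardinality"
begin

text \<open>Candidates are the elements of a finite type 'c. A profile is a partial map from
  voters (natural numbers) to ballots; its domain is the electorate N_A.\<close>

type_synonym 'c profile = "nat \<Rightarrow> 'c set option"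

definition ballots :: "'c set set" where
  "ballots = {S. S \<noteq> {}}"

definition is_profile :: "'c profile \<Rightarrow> bool" where
  "is_profile A \<longleftrightarrow> finite (dom A) \<and> dom A \<noteq> {} \<and> 0 \<notin> dom A \<and> ran A \<subseteq> ballots"

definition committees :: "nat \<Rightarrow> 'c set set" where
  "committees k = {W. card W = k}"

definition is_ABC_rule :: "nat \<Rightarrow> ('c profile \<Rightarrow> 'c set set) \<Rightarrow> bool" where
  "is_ABC_rule k f \<longleftrightarrow> (\<forall>A. is_profile A \<longrightarrow> f A \<noteq> {} \<and> f A \<subseteq> committees k)"

definition anonymous :: "('c profile \<Rightarrow> 'c set set) \<Rightarrow> bool" where
  "anonymous f \<longleftrightarrow> (\<forall>A \<pi>. is_profile A \<and> bij \<pi> \<and> is_profile (A \<circ> \<pi>) \<longrightarrow> f (A \<circ> \<pi>) = f A)"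

definition rename_profile :: "('c \<Rightarrow> 'c) \<Rightarrow> 'c profile \<Rightarrow> 'c profile" where
  "rename_profile \<tau> A = (\<lambda>i. map_option (image \<tau>) (A i))"

definition neutral :: "('c profile \<Rightarrow> 'c set set) \<Rightarrow> bool" where
  "neutral f \<longleftrightarrow> (\<forall>A \<tau>. is_profile A \<and> bij \<tau> \<longrightarrow> f (rename_profile \<tau> A) = image \<tau> ` f A)"

definition consistent :: "('c profile \<Rightarrow> 'c set set) \<Rightarrow> bool" where
  "consistent f \<longleftrightarrow> (\<forall>A A'. is_profile A \<and> is_profile A' \<and> dom A \<inter> dom A' = {}
      \<and> f A \<inter> f A' \<noteq> {} \<longrightarrow> f (A ++ A') = f A \<inter> f A')"

definition non_imposing :: "nat \<Rightarrow> ('c profile \<Rightarrow> 'c set set) \<Rightarrow> bool" where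
  "non_imposing k f \<longleftrightarrow> (\<forall>W \<in> committees k. \<exists>A. is_profile A \<and> f A = {W})"

text \<open>Vectors in Q^|A| are represented as functions indexed directly by ballots
  (instead of via a fixed bijection B); the value at the non-ballot {} is fixed to 0.\<close>

definition vecs :: "('c set \<Rightarrow> rat) set" where
  "vecs = {v. v {} = 0}"

definition vec_of :: "'c profile \<Rightarrow> ('c set \<Rightarrow> rat)" where
  "vec_of A = (\<lambda>S. if S = {} then 0 else of_nat (card {i \<in> dom A. A i = Some S}))"

definition perm_vec :: "('c \<Rightarrow> 'c) \<Rightarrow> ('c set \<Rightarrow> rat) \<Rightarrow> ('c set \<Rightarrow> rat)" where
  "perm_vec \<tau> v = (\<lambda>S. v (inv \<tau> ` S))"

end

theory Submission
  imports Defs "HOL-Library.Multiset"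
begin

definition uvec :: "'c set \<Rightarrow> rat" where "uvec S = (if S = {} then 0 else 1)"
definition Rv :: "('c set \<Rightarrow> rat) \<Rightarrow> bool" where
  "Rv w \<longleftrightarrow> w {} = 0 \<and> (\<forall>S. w S \<in> \<nat>) \<and> (\<exists>S. w S \<noteq> 0)"
definition Fv :: "('c profile \<Rightarrow> 'c set set) \<Rightarrow> ('c set \<Rightarrow> rat) \<Rightarrow> 'c set set" where
  "Fv f w = f (SOME A. is_profile A \<and> vec_of A = w)"
definition prof :: "nat \<Rightarrow> 'c set list \<Rightarrow> 'c profile" where
  "prof N L = (\<lambda>i. if N < i \<and> i \<le> N + length L then Some (L ! (i - N - 1)) else None)"
definition sw :: "nat \<Rightarrow> nat \<Rightarrow> nat \<Rightarrow> nat" where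
  "sw a b x = (if x = a then b else if x = b then a else x)"

lemma vec_of_alt: "vec_of A S = (if S = {} then 0 else of_nat (card {i. A i = Some S}))"
proof -
  have "{i \<in> dom A. A i = Some S} = {i. A i = Some S}" by auto
  thus ?thesis by (simp add: vec_of_def)
qed

lemma sw_inv[simp]: "sw a b (sw a b x) = x" by (simp add: sw_def)

lemma bij_sw: "bij (sw a b)"
  by (rule o_bij[of "sw a b"]) (auto simp: fun_eq_iff)

lemma inj_sw: "inj (sw a b)" using bij_sw bij_def by blast

lemma sw_image: "{x. P (sw a b x)} = sw a b ` {x. P x}"
  by (auto simp: image_iff) (metis sw_inv)

lemma anon_eq:
  assumes an: "anonymous f" and pB: "is_profile B"
  shows "is_profile A \<Longrightarrow> vec_of A = vec_of B \<Longrightarrow> f A = f B"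
proof (induction "card {i. A i \<noteq> B i}" arbitrary: A rule: less_induct)
  case (less A)
  have pA: "is_profile A" by fact
  have finD: "finite {i. A i \<noteq> B i}"
  proof (rule finite_subset)
    show "{i. A i \<noteq> B i} \<subseteq> dom A \<union> dom B" by auto
    show "finite (dom A \<union> dom B)" using pA pB by (simp add: is_profile_def)
  qed
  have cnt: "card {i. A i = Some S} = card {i. B i = Some S}" if "S \<noteq> {}" for S
    using fun_cong[OF less.prems(2), of S] that by (simp add: vec_of_alt)
  have finA: "finite {i. A i = Some S}" for S
    by (rule finite_subset[of _ "dom A"]) (use pA in \<open>auto simp: is_profile_def\<close>)
  have finB: "finite {i. B i = Some S}" for S
    by (rule finite_subset[of _ "dom B"]) (use pB in \<open>auto simp: is_profile_def\<close>)
  have ranA: "S \<noteq> {}" if "A i = Some S" for i S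
    using pA that unfolding is_profile_def ballots_def by (auto intro: ranI)
  have ranB: "S \<noteq> {}" if "B i = Some S" for i S
    using pB that unfolding is_profile_def ballots_def by (auto intro: ranI)
  show ?case
  proof (cases "{i. A i \<noteq> B i} = {}")
    case True then have "A = B" by (auto simp: fun_eq_iff)
    thus ?thesis by simp
  next
    case False
    obtain i S where iS: "B i = Some S" "A i \<noteq> Some S"
    proof -
      from False obtain i0 where i0: "A i0 \<noteq> B i0" by auto
      show thesis
      proof (cases "B i0")
        case (Some S) then show ?thesis using that i0 by auto
      next
        case None
        then obtain S where AS: "A i0 = Some S" using i0 by (cases "A i0") auto
        have c: "card {i. A i = Some S} = card {i. B i = Some S}" using cnt ranA[OF AS] .
        have "\<exists>j. B j = Some S \<and> A j \<noteq> Some S"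
        proof (rule ccontr)
          assume "\<not> ?thesis"
          hence "{i. B i = Some S} \<subseteq> {i. A i = Some S}" by auto
          moreover have "i0 \<in> {i. A i = Some S}" "i0 \<notin> {i. B i = Some S}" using AS None by auto
          ultimately have "{i. B i = Some S} \<subset> {i. A i = Some S}" by blast
          hence "card {i. B i = Some S} < card {i. A i = Some S}"
            using finA by (rule psubset_card_mono[rotated])
          thus False using c by simp
        qed
        thus ?thesis using that by blast
      qed
    qed
    have c: "card {i. A i = Some S} = card {i. B i = Some S}" using cnt ranB[OF iS(1)] .
    obtain j where j: "A j = Some S" "B j \<noteq> Some S"
    proof -
      have "\<exists>j. A j = Some S \<and> B j \<noteq> Some S"
      proof (rule ccontr)
        assume "\<not> ?thesis"
        hence "{i. A i = Some S} \<subseteq> {i. B i = Some S}" by auto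
        moreover have "i \<in> {j. B j = Some S}" "i \<notin> {j. A j = Some S}" using iS by auto
        ultimately have "{i. A i = Some S} \<subset> {i. B i = Some S}" by blast
        hence "card {i. A i = Some S} < card {i. B i = Some S}"
          using finB by (rule psubset_card_mono[rotated])
        thus False using c by simp
      qed
      thus ?thesis using that by blast
    qed
    have ij: "i \<noteq> j" using iS j by auto
    have i0: "i \<noteq> 0" using iS(1) pB unfolding is_profile_def by (metis domI)
    have j0: "j \<noteq> 0" using j(1) pA unfolding is_profile_def by (metis domI)
    define A' where "A' = A \<circ> sw i j"
    have A'i: "A' i = B i" using iS j by (simp add: A'_def sw_def)
    have A'o: "A' x = A x" if "x \<noteq> i" "x \<noteq> j" for x using that by (simp add: A'_def sw_def)
    have sub: "{x. A' x \<noteq> B x} \<subseteq> {x. A x \<noteq> B x} - {i}"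
    proof
      fix x assume x: "x \<in> {x. A' x \<noteq> B x}"
      show "x \<in> {x. A x \<noteq> B x} - {i}"
      proof (cases "x = i")
        case True then show ?thesis using x A'i by simp
      next
        case False
        show ?thesis
        proof (cases "x = j")
          case True then show ?thesis using j False by auto
        next
          case False2: False
          then show ?thesis using x A'o[OF False False2] False by simp
        qed
      qed
    qed
    have iD: "i \<in> {x. A x \<noteq> B x}" using iS by auto
    have lt: "card {x. A' x \<noteq> B x} < card {x. A x \<noteq> B x}"
    proof -
      have "card {x. A' x \<noteq> B x} \<le> card ({x. A x \<noteq> B x} - {i})"
        using sub finD by (intro card_mono) auto
      also have "\<dots> < card {x. A x \<noteq> B x}" using finD iD by (rule card_Diff1_less)
      finally show ?thesis .
    qed
    have domA': "dom A' = sw i j ` dom A"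
      unfolding A'_def dom_def using sw_image[of "\<lambda>x. A x \<noteq> None" i j] by simp
    have sw0: "sw i j 0 = 0" using i0 j0 by (simp add: sw_def)
    have pA': "is_profile A'"
      unfolding is_profile_def
    proof (intro conjI)
      show "finite (dom A')" using pA domA' by (simp add: is_profile_def)
      show "dom A' \<noteq> {}" using pA domA' by (simp add: is_profile_def)
      show "0 \<notin> dom A'" using pA sw0 unfolding A'_def is_profile_def by (auto simp: dom_def)
      show "ran A' \<subseteq> ballots" using pA unfolding A'_def is_profile_def
        by (auto simp: ran_def)
    qed
    have vA': "vec_of A' = vec_of A"
    proof
      fix T
      have "{x. A' x = Some T} = sw i j ` {x. A x = Some T}"
        unfolding A'_def using sw_image[of "\<lambda>x. A x = Some T" i j] by simp
      hence "card {x. A' x = Some T} = card {x. A x = Some T}"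
        using inj_sw card_image by (metis inj_on_subset subset_UNIV)
      thus "vec_of A' T = vec_of A T" by (simp add: vec_of_alt)
    qed
    have "f A' = f A" using an bij_sw pA' pA unfolding anonymous_def A'_def by blast
    moreover have "f A' = f B" using less.hyps[OF lt pA'] vA' less.prems(2) by simp
    ultimately show ?thesis by simp
  qed
qed

lemma Fv_prof: "anonymous f \<Longrightarrow> is_profile B \<Longrightarrow> Fv f (vec_of B) = f B"
proof -
  assume an: "anonymous f" and pB: "is_profile B"
  let ?A = "SOME A. is_profile A \<and> vec_of A = vec_of B"
  have "is_profile ?A \<and> vec_of ?A = vec_of B" by (rule someI[of _ B]) (use pB in simp)
  thus ?thesis unfolding Fv_def using anon_eq[OF an pB] by blast
qed


lemma dom_prof: "dom (prof N L) = {N<..N + length L}"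
  by (auto simp: prof_def dom_def split: if_splits)

lemma prof_profile: "L \<noteq> [] \<Longrightarrow> {} \<notin> set L \<Longrightarrow> is_profile (prof N L)"
  unfolding is_profile_def dom_prof
proof (intro conjI)
  assume L: "L \<noteq> []" "{} \<notin> set L"
  show "{N<..N + length L} \<noteq> {}" using L by auto
  show "ran (prof N L) \<subseteq> ballots"
  proof
    fix x assume "x \<in> ran (prof N L)"
    then obtain i where i: "N < i" "i \<le> N + length L" "x = L ! (i - N - 1)"
      by (auto simp: ran_def prof_def split: if_splits)
    hence "x \<in> set L" by auto
    thus "x \<in> ballots" using L by (auto simp: ballots_def)
  qed
qed auto

lemma count_card: "count (mset L) S = card {j. j < length L \<and> L ! j = S}"
proof -
  have "count (mset L) S = length (filter ((=) S) L)"
    using replicate_count_mset_eq_filter_eq[of L S] by (metis length_replicate)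
  also have "\<dots> = card {j. j < length L \<and> L ! j = S}"
    by (simp add: length_filter_conv_card eq_commute)
  finally show ?thesis .
qed

lemma prof_vec: "vec_of (prof N L) S = (if S = {} then 0 else of_nat (count (mset L) S))"
proof -
  have "{i. prof N L i = Some S} = (\<lambda>j. Suc (N + j)) ` {j. j < length L \<and> L ! j = S}"
  proof (rule set_eqI, rule iffI)
    fix i assume "i \<in> {i. prof N L i = Some S}"
    hence i: "N < i" "i \<le> N + length L" "L ! (i - N - 1) = S"
      by (auto simp: prof_def split: if_splits)
    show "i \<in> (\<lambda>j. Suc (N + j)) ` {j. j < length L \<and> L ! j = S}"
      using i by (intro image_eqI[of _ _ "i - N - 1"]) auto
  qed (auto simp: prof_def)
  hence "card {i. prof N L i = Some S} = card {j. j < length L \<and> L ! j = S}"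
    by (simp add: card_image inj_on_def)
  thus ?thesis by (simp add: vec_of_alt count_card)
qed

lemma prof_append: "prof 0 (L1 @ L2) = prof 0 L1 ++ prof (length L1) L2"
  by (auto simp: fun_eq_iff prof_def map_add_def nth_append split: option.splits)

lemma prof_disj: "dom (prof 0 L1) \<inter> dom (prof (length L1) L2) = {}"
  by (auto simp: dom_prof)

lemma Nats_of_nat_nat_floor: "(x::rat) \<in> \<nat> \<Longrightarrow> of_nat (nat \<lfloor>x\<rfloor>) = x"
  by (erule Nats_cases) simp

lemma realize:
  fixes w :: "'c::finite set \<Rightarrow> rat"
  assumes "Rv w"
  shows "\<exists>L. L \<noteq> [] \<and> {} \<notin> set L \<and> (\<forall>S. S \<noteq> {} \<longrightarrow> of_nat (count (mset L) S) = w S)"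
proof -
  define c where "c S = nat \<lfloor>w S\<rfloor>" for S
  have cM: "count (Abs_multiset c) = c" by (rule count_Abs_multiset) simp
  obtain L where L: "mset L = Abs_multiset c" using ex_mset by blast
  have cL: "count (mset L) S = c S" for S using L cM by simp
  have wS: "of_nat (c S) = w S" for S using assms by (simp add: Rv_def c_def Nats_of_nat_nat_floor)
  obtain S where S: "w S \<noteq> 0" using assms by (auto simp: Rv_def)
  have "count (mset L) S \<noteq> 0" using wS[of S] S cL[of S] by auto
  hence "L \<noteq> []" by auto
  moreover have "count (mset L) {} = 0" using cL[of "{}"] assms by (simp add: c_def Rv_def)
  hence "{} \<notin> set L" by (simp add: count_mset_0_iff)
  ultimately show ?thesis using cL wS by auto
qed

lemma realize_prof:
  fixes w :: "'c::finite set \<Rightarrow> rat"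
  assumes "Rv w"
  shows "\<exists>L. is_profile (prof 0 L) \<and> (\<forall>N. is_profile (prof N L) \<and> vec_of (prof N L) = w)"
proof -
  obtain L where L: "L \<noteq> []" "{} \<notin> set L" "\<forall>S. S \<noteq> {} \<longrightarrow> of_nat (count (mset L) S) = w S"
    using realize[OF assms] by blast
  have "vec_of (prof N L) = w" for N
    using L(3) assms by (auto simp: fun_eq_iff prof_vec Rv_def)
  thus ?thesis using prof_profile[OF L(1,2)] by blast
qed


lemma bij_image_iff: "bij \<tau> \<Longrightarrow> (\<tau> ` T = S) \<longleftrightarrow> (T = inv \<tau> ` S)"
  by (metis bij_is_inj bij_is_surj image_f_inv_f image_inv_f_f)

lemma rename_vec:
  assumes "bij \<tau>" shows "vec_of (rename_profile \<tau> A) = perm_vec \<tau> (vec_of A)"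
proof
  fix S
  have "{i. rename_profile \<tau> A i = Some S} = {i. A i = Some (inv \<tau> ` S)}"
    using bij_image_iff[OF assms] by (auto simp: rename_profile_def)
  thus "vec_of (rename_profile \<tau> A) S = perm_vec \<tau> (vec_of A) S"
    by (simp add: vec_of_alt perm_vec_def)
qed

lemma rename_is_profile:
  assumes "is_profile A" shows "is_profile (rename_profile \<tau> A)"
proof -
  have d: "dom (rename_profile \<tau> A) = dom A" by (auto simp: rename_profile_def dom_def)
  have "ran (rename_profile \<tau> A) \<subseteq> ballots"
  proof
    fix x assume "x \<in> ran (rename_profile \<tau> A)"
    then obtain i T where "A i = Some T" "x = \<tau> ` T" by (auto simp: ran_def rename_profile_def)
    moreover have "T \<in> ballots" using assms \<open>A i = Some T\<close> unfolding is_profile_def by (auto intro: ranI)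
    ultimately show "x \<in> ballots" by (auto simp: ballots_def)
  qed
  thus ?thesis using assms d by (simp add: is_profile_def)
qed

lemma Fv_basic:
  fixes w :: "'c::finite set \<Rightarrow> rat"
  assumes "anonymous f" "is_ABC_rule k f" "Rv w"
  shows "Fv f w \<noteq> {} \<and> Fv f w \<subseteq> committees k"
proof -
  obtain L where "is_profile (prof 0 L)" "vec_of (prof 0 L) = w" using realize_prof[OF assms(3)] by blast
  thus ?thesis using Fv_prof[OF assms(1)] assms(2) unfolding is_ABC_rule_def by metis
qed

lemma Fv_neut:
  fixes w :: "'c::finite set \<Rightarrow> rat"
  assumes "anonymous f" "neutral f" "Rv w" "bij \<tau>"
  shows "Fv f (perm_vec \<tau> w) = image \<tau> ` Fv f w"
proof -
  obtain L where L: "is_profile (prof 0 L)" "vec_of (prof 0 L) = w" using realize_prof[OF assms(3)] by blast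
  let ?A = "prof 0 L"
  have "Fv f (perm_vec \<tau> w) = Fv f (vec_of (rename_profile \<tau> ?A))"
    using rename_vec[OF assms(4)] L by simp
  also have "\<dots> = f (rename_profile \<tau> ?A)" by (rule Fv_prof[OF assms(1) rename_is_profile[OF L(1)]])
  also have "\<dots> = image \<tau> ` f ?A" using assms(2,4) L(1) unfolding neutral_def by blast
  also have "\<dots> = image \<tau> ` Fv f w" using Fv_prof[OF assms(1) L(1)] L(2) by simp
  finally show ?thesis .
qed

lemma Fv_cons:
  fixes w1 w2 :: "'c::finite set \<Rightarrow> rat"
  assumes "anonymous f" "consistent f" "Rv w1" "Rv w2" "Fv f w1 \<inter> Fv f w2 \<noteq> {}"
  shows "Fv f (\<lambda>S. w1 S + w2 S) = Fv f w1 \<inter> Fv f w2"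
proof -
  obtain L1 where L1: "is_profile (prof 0 L1)" "\<forall>N. is_profile (prof N L1) \<and> vec_of (prof N L1) = w1"
    using realize_prof[OF assms(3)] by blast
  obtain L2 where L2: "is_profile (prof 0 L2)" "\<forall>N. is_profile (prof N L2) \<and> vec_of (prof N L2) = w2"
    using realize_prof[OF assms(4)] by blast
  let ?A1 = "prof 0 L1" and ?A2 = "prof (length L1) L2" and ?A = "prof 0 (L1 @ L2)"
  have v1: "vec_of ?A1 = w1" and v2: "vec_of ?A2 = w2" using L1 L2 by auto
  have p1: "is_profile ?A1" and p2: "is_profile ?A2" using L1 L2 by auto
  have rr: "ran (?A1 ++ ?A2) = ran ?A1 \<union> ran ?A2" by (rule ran_map_add[OF prof_disj])
  have pA: "is_profile ?A" unfolding prof_append using p1 p2 rr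
    unfolding is_profile_def by auto
  have vA: "vec_of ?A = (\<lambda>S. w1 S + w2 S)"
  proof
    fix S
    show "vec_of ?A S = w1 S + w2 S"
      using fun_cong[OF v1, of S] fun_cong[OF v2, of S] assms(3,4)
      by (cases "S = {}") (auto simp: prof_vec Rv_def)
  qed
  have f1: "Fv f w1 = f ?A1" using Fv_prof[OF assms(1) p1] v1 by simp
  have f2: "Fv f w2 = f ?A2" using Fv_prof[OF assms(1) p2] v2 by simp
  have "Fv f (\<lambda>S. w1 S + w2 S) = f ?A" using Fv_prof[OF assms(1) pA] vA by simp
  also have "\<dots> = f ?A1 \<inter> f ?A2" unfolding prof_append
    using assms(2,5) p1 p2 prof_disj f1 f2 unfolding consistent_def by blast
  finally show ?thesis using f1 f2 by simp
qed


lemma Nats_nonneg: "(x::rat) \<in> \<nat> \<Longrightarrow> 0 \<le> x" by (erule Nats_cases) simp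

lemma Rv_uvec: "Rv (uvec :: 'c set \<Rightarrow> rat)"
  unfolding Rv_def uvec_def by (auto intro!: exI[of _ UNIV])

lemma Rv_add: "Rv w \<Longrightarrow> w' {} = 0 \<Longrightarrow> (\<forall>S. w' S \<in> \<nat>) \<Longrightarrow> Rv (\<lambda>S. w S + w' S)"
proof -
  assume a: "Rv w" "w' {} = 0" "\<forall>S. w' S \<in> \<nat>"
  then obtain S where S: "w S \<noteq> 0" "w S \<in> \<nat>" by (auto simp: Rv_def)
  have "0 \<le> w' S" using a(3) Nats_nonneg by blast
  moreover have "0 \<le> w S" using S Nats_nonneg by blast
  ultimately have "w S + w' S \<noteq> 0" using S by linarith
  thus ?thesis using a unfolding Rv_def by (auto intro: Nats_add)
qed

lemma Rv_scale: "Rv w \<Longrightarrow> 1 \<le> c \<Longrightarrow> Rv (\<lambda>S. of_nat c * w S)"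
  unfolding Rv_def by (auto intro: Nats_mult)

lemma Rv_perm: "Rv w \<Longrightarrow> bij \<tau> \<Longrightarrow> Rv (perm_vec \<tau> w)"
proof -
  assume a: "Rv w" "bij \<tau>"
  then obtain S where S: "w S \<noteq> 0" by (auto simp: Rv_def)
  have "inv \<tau> ` \<tau> ` S = S" using a(2) by (simp add: bij_is_inj image_inv_f_f)
  hence "perm_vec \<tau> w (\<tau> ` S) \<noteq> 0" using S by (simp add: perm_vec_def)
  thus ?thesis using a(1) unfolding Rv_def perm_vec_def by auto
qed

lemma perm_uvec: "perm_vec \<tau> uvec = uvec"
  by (auto simp: perm_vec_def uvec_def fun_eq_iff)

lemma exists_bij:
  fixes W W' :: "'c::finite set"
  assumes "card W = card W'"
  shows "\<exists>\<tau>. bij \<tau> \<and> \<tau> ` W = W'"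
proof -
  obtain h where h: "bij_betw h W W'"
    using finite_same_card_bij[of W W'] assms by (meson finite)
  have "card (- W) = card (- W')" using assms by (simp add: Compl_eq_Diff_UNIV card_Diff_subset)
  then obtain h' where h': "bij_betw h' (- W) (- W')"
    using finite_same_card_bij[of "- W" "- W'"] by (meson finite)
  define \<tau> where "\<tau> x = (if x \<in> W then h x else h' x)" for x
  have "bij_betw (\<lambda>x. if x \<in> W then h x else h' x) (W \<union> - W) (W' \<union> - W')"
    by (rule bij_betw_disjoint_Un[OF h h']) simp_all
  hence "bij \<tau>" unfolding \<tau>_def by simp
  moreover have "\<tau> ` W = h ` W" unfolding \<tau>_def by (rule image_cong) simp_all
  hence "\<tau> ` W = W'" using h by (simp add: bij_betw_def)
  ultimately show ?thesis by blast
qed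

definition wv :: "('c set \<Rightarrow> rat) \<Rightarrow> nat \<Rightarrow> nat \<Rightarrow> 'c set \<Rightarrow> rat" where
  "wv v d n = (\<lambda>S. of_nat d * v S + of_nat n * uvec S)"
definition good :: "('c set \<Rightarrow> rat) \<Rightarrow> nat \<Rightarrow> nat \<Rightarrow> bool" where
  "good v d n \<longleftrightarrow> 1 \<le> d \<and> Rv (wv v d n)"
definition gfun :: "('c profile \<Rightarrow> 'c set set) \<Rightarrow> ('c set \<Rightarrow> rat) \<Rightarrow> 'c set set" where
  "gfun f v = Fv f (wv v (fst (SOME p. good v (fst p) (snd p))) (snd (SOME p. good v (fst p) (snd p))))"

context
  fixes f :: "('c::finite) profile \<Rightarrow> 'c set set" and k :: nat
  assumes abc: "is_ABC_rule k f" and an: "anonymous f" and ne: "neutral f" and co: "consistent f"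
begin

lemma Fv_u: "Fv f uvec = committees k"
proof
  show "Fv f uvec \<subseteq> committees k" using Fv_basic[OF an abc Rv_uvec] by blast
  show "committees k \<subseteq> Fv f uvec"
  proof
    fix W' :: "'c set" assume W': "W' \<in> committees k"
    obtain W where W: "W \<in> Fv f uvec" using Fv_basic[OF an abc Rv_uvec] by blast
    hence "card W = card W'" using W' Fv_basic[OF an abc Rv_uvec] by (auto simp: committees_def)
    then obtain \<tau> where t: "bij \<tau>" "\<tau> ` W = W'" using exists_bij by blast
    have eq: "Fv f uvec = image \<tau> ` Fv f uvec" using Fv_neut[OF an ne Rv_uvec t(1)] unfolding perm_uvec .
    have "W' \<in> image \<tau> ` Fv f uvec" using W t(2) by blast
    thus "W' \<in> Fv f uvec" by (subst eq)
  qed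
qed

lemma Rv_addu: "Rv w \<Longrightarrow> Rv (\<lambda>S. w S + of_nat n * uvec S)"
  by (rule Rv_add) (auto simp: uvec_def)

lemma Fv_addu: "Rv w \<Longrightarrow> Fv f (\<lambda>S. w S + of_nat n * uvec S) = Fv f w"
proof (induction n)
  case 0 then show ?case by simp
next
  case (Suc n)
  let ?w = "\<lambda>S. w S + of_nat n * uvec S"
  have R: "Rv ?w" using Rv_addu[OF Suc.prems] .
  have e: "(\<lambda>S. w S + of_nat (Suc n) * uvec S) = (\<lambda>S. ?w S + uvec S)"
    by (auto simp: fun_eq_iff algebra_simps)
  have b: "Fv f ?w \<noteq> {} \<and> Fv f ?w \<subseteq> committees k" using Fv_basic[OF an abc R] .
  have "Fv f (\<lambda>S. ?w S + uvec S) = Fv f ?w \<inter> Fv f uvec"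
    using Fv_cons[OF an co R Rv_uvec] b Fv_u by auto
  also have "\<dots> = Fv f ?w" using b Fv_u by auto
  finally show ?case using e Suc.IH[OF Suc.prems] by simp
qed

lemma Fv_scale: "Rv w \<Longrightarrow> Fv f (\<lambda>S. of_nat (Suc c) * w S) = Fv f w"
proof (induction c)
  case 0 then show ?case by simp
next
  case (Suc c)
  let ?w = "\<lambda>S. of_nat (Suc c) * w S"
  have R: "Rv ?w" by (rule Rv_scale[OF Suc.prems]) simp
  have e: "(\<lambda>S. of_nat (Suc (Suc c)) * w S) = (\<lambda>S. ?w S + w S)"
    by (auto simp: fun_eq_iff algebra_simps)
  have b: "Fv f w \<noteq> {}" using Fv_basic[OF an abc Suc.prems] by blast
  have "Fv f (\<lambda>S. ?w S + w S) = Fv f ?w \<inter> Fv f w"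
    using Fv_cons[OF an co R Suc.prems] b Suc.IH[OF Suc.prems] by auto
  thus ?case using e Suc.IH[OF Suc.prems] by simp
qed

lemma good_mono: "good v d n \<Longrightarrow> n \<le> n' \<Longrightarrow> good v d n' \<and> Fv f (wv v d n') = Fv f (wv v d n)"
proof -
  assume g: "good v d n" and nn: "n \<le> n'"
  have e: "wv v d n' = (\<lambda>S. wv v d n S + of_nat (n' - n) * uvec S)"
    using nn by (auto simp: wv_def fun_eq_iff algebra_simps of_nat_diff)
  have R: "Rv (wv v d n)" using g by (simp add: good_def)
  show ?thesis using g Rv_addu[OF R] Fv_addu[OF R] e by (simp add: good_def)
qed

lemma good_scale: "good v d n \<Longrightarrow> 1 \<le> c \<Longrightarrow> good v (c*d) (c*n) \<and> Fv f (wv v (c*d) (c*n)) = Fv f (wv v d n)"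
proof -
  assume g: "good v d n" and c: "1 \<le> c"
  then obtain c' where c': "c = Suc c'" by (cases c) auto
  have e: "wv v (c*d) (c*n) = (\<lambda>S. of_nat (Suc c') * wv v d n S)"
    using c' by (auto simp: wv_def fun_eq_iff algebra_simps)
  have R: "Rv (wv v d n)" using g by (simp add: good_def)
  have "Rv (\<lambda>S. of_nat (Suc c') * wv v d n S)" by (rule Rv_scale[OF R]) simp
  moreover have "1 \<le> c * d" using g c by (simp add: good_def)
  ultimately show ?thesis using e Fv_scale[OF R, of c'] by (simp add: good_def)
qed

lemma good_eq: "good v d1 n1 \<Longrightarrow> good v d2 n2 \<Longrightarrow> Fv f (wv v d1 n1) = Fv f (wv v d2 n2)"
proof -
  assume g1: "good v d1 n1" and g2: "good v d2 n2"
  have d: "1 \<le> d1" "1 \<le> d2" using g1 g2 by (auto simp: good_def)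
  have a1: "good v (d2*d1) (d2*n1)" "Fv f (wv v (d2*d1) (d2*n1)) = Fv f (wv v d1 n1)"
    using good_scale[OF g1 d(2)] by auto
  have a2: "good v (d1*d2) (d1*n2)" "Fv f (wv v (d1*d2) (d1*n2)) = Fv f (wv v d2 n2)"
    using good_scale[OF g2 d(1)] by auto
  let ?N = "max (d2*n1) (d1*n2)"
  have b1: "Fv f (wv v (d1*d2) ?N) = Fv f (wv v (d1*d2) (d2*n1))"
    using good_mono[of v "d1*d2" "d2*n1" ?N] a1 by (simp add: mult.commute)
  have b2: "Fv f (wv v (d1*d2) ?N) = Fv f (wv v (d1*d2) (d1*n2))"
    using good_mono[OF a2(1), of ?N] by simp
  show ?thesis using a1 a2 b1 b2 by (simp add: mult.commute)
qed

lemma gfun_eq: "good v d n \<Longrightarrow> gfun f v = Fv f (wv v d n)"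
proof -
  assume g: "good v d n"
  let ?p = "SOME p. good v (fst p) (snd p)"
  have "good v (fst ?p) (snd ?p)" by (rule someI[of _ "(d, n)"]) (use g in simp)
  thus ?thesis unfolding gfun_def using good_eq g by blast
qed

end

lemma denom: "\<exists>b::nat. 1 \<le> b \<and> of_nat b * (x::rat) \<in> \<int>"
proof -
  obtain a b where q: "quotient_of x = (a, b)" by (cases "quotient_of x") auto
  have b: "b > 0" using quotient_of_denom_pos[OF q] .
  have x: "x = of_int a / of_int b" using quotient_of_div[OF q] .
  have "of_nat (nat b) * x = of_int a" using b x by simp
  thus ?thesis using b by (intro exI[of _ "nat b"]) auto
qed

lemma denoms: "finite X \<Longrightarrow> \<exists>d::nat. 1 \<le> d \<and> (\<forall>S\<in>X. of_nat d * (v S :: rat) \<in> \<int>)"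
proof (induction X rule: finite_induct)
  case empty then show ?case by auto
next
  case (insert S X)
  then obtain d where d: "1 \<le> d" "\<forall>T\<in>X. of_nat d * v T \<in> \<int>" by blast
  obtain b where b: "1 \<le> b" "of_nat b * v S \<in> \<int>" using denom by blast
  have "\<forall>T\<in>insert S X. of_nat (d * b) * v T \<in> \<int>"
  proof
    fix T assume "T \<in> insert S X"
    then show "of_nat (d * b) * v T \<in> \<int>"
    proof
      assume "T = S"
      have "of_nat (d * b) * v T = of_nat d * (of_nat b * v S)" using \<open>T = S\<close> by (simp only: of_nat_mult mult.assoc)
      thus ?thesis using b(2) by (metis Ints_mult Ints_of_nat)
    next
      assume "T \<in> X"
      have "of_nat (d * b) * v T = of_nat b * (of_nat d * v T)" by (simp add: algebra_simps)
      thus ?thesis using d(2) \<open>T \<in> X\<close> by (metis Ints_mult Ints_of_nat)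
    qed
  qed
  moreover have "1 \<le> d * b" using d b by simp
  ultimately show ?case by blast
qed

lemma Ints_nonneg_Nats: "(y::rat) \<in> \<int> \<Longrightarrow> 0 \<le> y \<Longrightarrow> y \<in> \<nat>"
proof -
  assume "y \<in> \<int>" "0 \<le> y"
  then obtain z where z: "y = of_int z" "0 \<le> z" by (auto elim: Ints_cases)
  hence "y = of_nat (nat z)" by simp
  thus ?thesis by simp
qed

lemma good_ex:
  fixes v :: "'c::finite set \<Rightarrow> rat"
  assumes v0: "v {} = 0"
  shows "\<exists>d n. good v d n"
proof -
  obtain d :: nat where d: "1 \<le> d" "\<forall>S\<in>UNIV. of_nat d * v S \<in> \<int>" using denoms[of UNIV v] by auto
  define n where "n = Suc (nat \<lceil>\<Sum>S\<in>UNIV. \<bar>of_nat d * v S\<bar>\<rceil>)"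
  have big: "\<bar>of_nat d * v S\<bar> + 1 \<le> of_nat n" for S
  proof -
    have "\<bar>of_nat d * v S\<bar> \<le> (\<Sum>S\<in>UNIV. \<bar>of_nat d * v S\<bar>)"
      by (rule member_le_sum) auto
    also have "\<dots> \<le> of_int \<lceil>\<Sum>S\<in>UNIV. \<bar>of_nat d * v S\<bar>\<rceil>" by (rule le_of_int_ceiling)
    also have "\<dots> \<le> of_nat (nat \<lceil>\<Sum>S\<in>UNIV. \<bar>of_nat d * v S\<bar>\<rceil>)" by simp
    finally show ?thesis unfolding n_def by simp
  qed
  have nat: "wv v d n S \<in> \<nat>" for S
  proof (cases "S = {}")
    case True then show ?thesis using v0 by (simp add: wv_def uvec_def)
  next
    case False
    have "wv v d n S = of_nat d * v S + of_nat n" using False by (simp add: wv_def uvec_def)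
    moreover have "of_nat d * v S + of_nat n \<in> \<int>" using d(2) by (simp add: Ints_add)
    moreover have "0 \<le> of_nat d * v S + of_nat n" using big[of S] by linarith
    ultimately show ?thesis using Ints_nonneg_Nats by simp
  qed
  have "wv v d n UNIV \<noteq> 0"
  proof -
    have "wv v d n UNIV = of_nat d * v UNIV + of_nat n" by (simp add: wv_def uvec_def)
    moreover have "1 \<le> of_nat d * v UNIV + of_nat n" using big[of UNIV] by linarith
    ultimately show ?thesis by simp
  qed
  moreover have "wv v d n {} = 0" using v0 by (simp add: wv_def uvec_def)
  ultimately have "Rv (wv v d n)" using nat unfolding Rv_def by blast
  thus ?thesis using d(1) unfolding good_def by blast
qed

lemma Rv_vec_of: "is_profile A \<Longrightarrow> Rv (vec_of A)"
proof -
  assume pA: "is_profile A"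
  then obtain i S where iS: "A i = Some S" unfolding is_profile_def by blast
  have S: "S \<noteq> {}" using pA iS unfolding is_profile_def ballots_def by (auto intro: ranI)
  have fin: "finite {i. A i = Some S}"
    by (rule finite_subset[of _ "dom A"]) (use pA in \<open>auto simp: is_profile_def\<close>)
  have "card {i. A i = Some S} \<noteq> 0" using fin iS by auto
  hence "vec_of A S \<noteq> 0" using S by (simp add: vec_of_alt)
  moreover have "vec_of A {} = 0" "\<forall>T. vec_of A T \<in> \<nat>" by (auto simp: vec_of_alt)
  ultimately show ?thesis unfolding Rv_def by blast
qed

theorem mainTheorem7:
  fixes f :: "('c::finite) profile \<Rightarrow> 'c set set" and k :: nat
  assumes "CARD('c) \<ge> 2" and "1 \<le> k" and "k \<le> CARD('c) - 1"
    and "is_ABC_rule k f" and "non_imposing k f"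
    and "anonymous f" and "neutral f" and "consistent f"
  shows "\<exists>g :: ('c set \<Rightarrow> rat) \<Rightarrow> 'c set set.
     (\<forall>v \<in> vecs. g v \<noteq> {} \<and> g v \<subseteq> committees k)
   \<and> (\<forall>v \<in> vecs. \<forall>\<tau>. bij \<tau> \<longrightarrow> g (perm_vec \<tau> v) = image \<tau> ` g v)
   \<and> (\<forall>v \<in> vecs. \<forall>v' \<in> vecs. g v \<inter> g v' \<noteq> {} \<longrightarrow> g (\<lambda>S. v S + v' S) = g v \<inter> g v')
   \<and> (\<forall>A. is_profile A \<longrightarrow> g (vec_of A) = f A)"
proof (intro exI[of _ "gfun f"] conjI ballI allI impI)
  note abc = assms(4) and an = assms(6) and ne = assms(7) and co = assms(8)
  note geq = gfun_eq[OF abc an ne co] and gmono = good_mono[OF abc an ne co]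
    and gscale = good_scale[OF abc an ne co]
  {
    fix v :: "'c set \<Rightarrow> rat" assume "v \<in> vecs"
    then obtain d n where g: "good v d n" using good_ex[of v] by (auto simp: vecs_def)
    have "Rv (wv v d n)" using g by (simp add: good_def)
    thus "gfun f v \<noteq> {}" "gfun f v \<subseteq> committees k"
      using Fv_basic[OF an abc] geq[OF g] by auto
  }
  {
    fix v :: "'c set \<Rightarrow> rat" and \<tau> :: "'c \<Rightarrow> 'c" assume "v \<in> vecs" "bij \<tau>"
    then obtain d n where g: "good v d n" using good_ex[of v] by (auto simp: vecs_def)
    have R: "Rv (wv v d n)" using g by (simp add: good_def)
    have e: "wv (perm_vec \<tau> v) d n = perm_vec \<tau> (wv v d n)"
      by (auto simp: wv_def perm_vec_def uvec_def fun_eq_iff)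
    have g': "good (perm_vec \<tau> v) d n" using g Rv_perm[OF R \<open>bij \<tau>\<close>] e by (simp add: good_def)
    show "gfun f (perm_vec \<tau> v) = image \<tau> ` gfun f v"
      using geq[OF g'] geq[OF g] e Fv_neut[OF an ne R \<open>bij \<tau>\<close>] by simp
  }
  {
    fix v v' :: "'c set \<Rightarrow> rat" assume "v \<in> vecs" "v' \<in> vecs" and ne0: "gfun f v \<inter> gfun f v' \<noteq> {}"
    obtain d1 n1 where g1: "good v d1 n1" using good_ex[of v] \<open>v \<in> vecs\<close> by (auto simp: vecs_def)
    obtain d2 n2 where g2: "good v' d2 n2" using good_ex[of v'] \<open>v' \<in> vecs\<close> by (auto simp: vecs_def)
    have d: "1 \<le> d1" "1 \<le> d2" using g1 g2 by (auto simp: good_def)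
    let ?D = "d1 * d2" and ?N = "max (d2*n1) (d1*n2)"
    have a1: "good v ?D (d2*n1)" using gscale[OF g1 d(2)] by (simp add: mult.commute)
    have a2: "good v' ?D (d1*n2)" using gscale[OF g2 d(1)] by simp
    have h1: "good v ?D ?N" using gmono[OF a1, of ?N] by simp
    have h2: "good v' ?D ?N" using gmono[OF a2, of ?N] by simp
    have R1: "Rv (wv v ?D ?N)" and R2: "Rv (wv v' ?D ?N)" using h1 h2 by (auto simp: good_def)
    have e: "wv (\<lambda>S. v S + v' S) ?D (?N + ?N) = (\<lambda>S. wv v ?D ?N S + wv v' ?D ?N S)"
      by (auto simp: wv_def fun_eq_iff algebra_simps)
    have R: "Rv (\<lambda>S. wv v ?D ?N S + wv v' ?D ?N S)"
      by (rule Rv_add[OF R1]) (use R2 in \<open>auto simp: Rv_def\<close>)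
    have h: "good (\<lambda>S. v S + v' S) ?D (?N + ?N)" using R e h1 by (simp add: good_def)
    have f1: "gfun f v = Fv f (wv v ?D ?N)" by (rule geq[OF h1])
    have f2: "gfun f v' = Fv f (wv v' ?D ?N)" by (rule geq[OF h2])
    show "gfun f (\<lambda>S. v S + v' S) = gfun f v \<inter> gfun f v'"
      using geq[OF h] e f1 f2 Fv_cons[OF an co R1 R2] ne0 by simp
  }
  {
    fix A :: "'c profile" assume pA: "is_profile A"
    have e: "wv (vec_of A) 1 0 = vec_of A" by (simp add: wv_def)
    have g: "good (vec_of A) 1 0" using Rv_vec_of[OF pA] e by (simp add: good_def)
    show "gfun f (vec_of A) = f A" using geq[OF g] e Fv_prof[OF an pA] by simp
  }
qed

end
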